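(* With the notation of the context, $$\|\mathrm T^{{\rm b},m}\|^2_{kk_1\to k_2k_3}\lesssim(N_2\wedge N_3)^{2-\alpha}N_1^{2-\alpha},\qquad \|\mathrm T^{{\rm b},m}\|^2_{kk_3\to k_1k_2}\lesssim(N_1\wedge N_2)^{2-\alpha}N_3^{2-\alpha},$$ $$\|\mathrm T^{{\rm b},m}\|^2_{kk_2\to k_1k_3}\lesssim(N_1\wedge N_3)^{1-\frac\alpha2}(N\wedge N_2)^{1-\frac\alpha2}.$$
   Context: Fix $\alpha\in(1,2)$, dyadic numbers $1\le N_1,N_2,N_3\le N$, a real number $m$ and a constant $C_0>0$. Let $S$ be the set of $(k,k_1,k_2,k_3)\in\mathbb Z^4$ with $k=k_1-k_2+k_3$, $k_2\notin\{k_1,k_3\}$, $\big||k_1|^\alpha-|k_2|^\alpha+|k_3|^\alpha-|k|^\alpha-m\big|\le C_0$, $|k|\le N$ and $|k_j|\le N_j$ for $j=1,2,3$. The base tensor is $\mathrm T^{{\rm b},m}_{kk_1k_2k_3}=\mathbf 1_S(k,k_1,k_2,k_3)$. For a tensor $H=H_{k_A}$ indexed by $k_A=(k_j)_{j\in A}\in\mathbb Z^A$ and a partition $(B,C)$ of $A$, $\|H\|_{k_B\to k_C}^2=\sup\{\sum_{k_C}|\sum_{k_B}H_{k_A}z_{k_B}|^2:\sum_{k_B}|z_{k_B}|^2=1\}$ (the $\ell^2_{k_B}\to\ell^2_{k_C}$ operator norm; for $C=\emptyset$ it is the $\ell^2_{k_A}$ norm). $a\wedge b=\min(a,b)$. $A\lesssim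 B$ means $A\le CB$ with $C$ depending only on $\alpha$ and $C_0$. *)

theory Defs
  imports "HOL-Analysis.Analysis"
begin

definition dyadic :: "real \<Rightarrow> bool" where
  "dyadic x \<longleftrightarrow> (\<exists>n::nat. x = 2 ^ n)"

definition inS :: "real \<Rightarrow> real \<Rightarrow> real \<Rightarrow> real \<Rightarrow> real \<Rightarrow> real \<Rightarrow> real
    \<Rightarrow> int \<Rightarrow> int \<Rightarrow> int \<Rightarrow> int \<Rightarrow> bool" where
  "inS \<alpha> C0 m N N1 N2 N3 k k1 k2 k3 \<longleftrightarrow>
     k = k1 - k2 + k3 \<and> k2 \<noteq> k1 \<and> k2 \<noteq> k3 \<and>
     \<bar>\<bar>real_of_int k1\<bar> powr \<alpha> - \<bar>real_of_int k2\<bar> powr \<alpha> + \<bar>real_of_int k3\<bar> powr \<alpha>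
       - \<bar>real_of_int k\<bar> powr \<alpha> - m\<bar> \<le> C0 \<and>
     \<bar>real_of_int k\<bar> \<le> N \<and> \<bar>real_of_int k1\<bar> \<le> N1 \<and>
     \<bar>real_of_int k2\<bar> \<le> N2 \<and> \<bar>real_of_int k3\<bar> \<le> N3"

definition Tb :: "real \<Rightarrow> real \<Rightarrow> real \<Rightarrow> real \<Rightarrow> real \<Rightarrow> real \<Rightarrow> real
    \<Rightarrow> int \<Rightarrow> int \<Rightarrow> int \<Rightarrow> int \<Rightarrow> real" where
  "Tb \<alpha> C0 m N N1 N2 N3 k k1 k2 k3 = (if inS \<alpha> C0 m N N1 N2 N3 k k1 k2 k3 then 1 else 0)"

text \<open>Squared l^2_{k_B} -> l^2_{k_C} operator norm of a tensor H b c
  (b = the k_B indices, c = the k_C indices).\<close>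
definition opnorm2 :: "('b \<Rightarrow> 'c \<Rightarrow> real) \<Rightarrow> real" where
  "opnorm2 H = Sup {(\<Sum>\<^sub>\<infinity> c. (\<Sum>\<^sub>\<infinity> b. H b c * z b)\<^sup>2) | z.
       (\<lambda>b. (z b)\<^sup>2) summable_on UNIV \<and> (\<Sum>\<^sub>\<infinity> b. (z b)\<^sup>2) = 1}"

end

theory Submission
  imports Defs
begin

definition PP :: "real \<Rightarrow> real \<Rightarrow> real" where "PP a t = \<bar>t\<bar> powr a"
definition phi :: "real \<Rightarrow> real \<Rightarrow> real" where "phi a t = a * sgn t * \<bar>t\<bar> powr (a - 1)"

lemma PP_deriv:
  assumes a: "1 < a"
  shows "(PP a has_real_derivative phi a t) (at t)"
proof -
  consider "t > 0" | "t < 0" | "t = 0" by linarith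
  then show ?thesis
  proof cases
    case 1
    have "((\<lambda>x. x powr a) has_real_derivative phi a t) (at t)"
      using has_real_derivative_powr[OF 1, of a] 1 by (simp add: phi_def)
    then show ?thesis
      by (rule has_field_derivative_transform_within_open[where S="{0<..}"])
         (use 1 in \<open>auto simp: PP_def phi_def\<close>)
  next
    case 2
    have "((\<lambda>x. (- x) powr a) has_real_derivative a * (-t) powr (a - of_nat 1) * (-1)) (at t)"
      by (rule DERIV_fun_powr) (use 2 in \<open>auto intro!: derivative_eq_intros\<close>)
    then have "((\<lambda>x. (- x) powr a) has_real_derivative phi a t) (at t)"
      using 2 by (simp add: phi_def)
    then show ?thesis
      by (rule has_field_derivative_transform_within_open[where S="{..<0}"])
         (use 2 in \<open>auto simp: PP_def phi_def\<close>)
  next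
    case 3
    have lim: "((\<lambda>y. \<bar>y\<bar> powr (a - 1)) \<longlongrightarrow> 0) (at 0)"
      by (rule tendsto_zero_powrI) (use a in \<open>auto intro!: tendsto_eq_intros\<close>)
    have ev: "eventually (\<lambda>y. norm ((PP a y - PP a 0) / (y - 0)) \<le> \<bar>y\<bar> powr (a - 1)) (at 0)"
    proof -
      have "eventually (\<lambda>y::real. y \<noteq> 0) (at 0)" by (simp add: eventually_at_filter)
      then show ?thesis
      proof eventually_elim
        case (elim y)
        then have "\<bar>y\<bar> powr a / \<bar>y\<bar> = \<bar>y\<bar> powr (a - 1)"
          by (simp add: powr_diff)
        then show ?case using a by (simp add: PP_def abs_divide)
      qed
    qed
    have "((\<lambda>y. (PP a y - PP a 0) / (y - 0)) \<longlongrightarrow> 0) (at 0)"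
      by (rule Lim_null_comparison[OF ev lim])
    then show ?thesis using 3 by (simp add: has_field_derivative_iff phi_def)
  qed
qed

lemma pow_incr:
  fixes b R t u :: real
  assumes b: "0 < b" "b < 1" and tu: "0 \<le> t" "t \<le> u" "u \<le> R"
  shows "b * R powr (b - 1) * (u - t) \<le> u powr b - t powr b"
proof (cases "t = 0")
  case True
  show ?thesis
  proof (cases "u = 0")
    case True then show ?thesis using \<open>t = 0\<close> by simp
  next
    case False
    then have u: "u > 0" using tu by simp
    have "R powr (b - 1) \<le> u powr (b - 1)"
      by (rule powr_mono2') (use b tu u in auto)
    then have "u * R powr (b - 1) \<le> u * u powr (b - 1)"
      using u by (simp add: mult_left_mono)
    also have "u * u powr (b - 1) = u powr b"
      using u by (simp add: powr_diff)
    finally have "u * R powr (b - 1) \<le> u powr b" .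
    moreover have "b * (R powr (b - 1) * u) \<le> 1 * (R powr (b - 1) * u)"
      by (rule mult_right_mono) (use b u in auto)
    ultimately show ?thesis using True by (simp add: algebra_simps)
  qed
next
  case False
  then have t: "t > 0" using tu by simp
  let ?g = "\<lambda>x. x powr b - b * R powr (b - 1) * x"
  have "?g t \<le> ?g u"
  proof (rule deriv_nonneg_imp_mono[where g = ?g and a = t and b = u and g' = "\<lambda>x. b * x powr (b - 1) - b * R powr (b - 1)"])
    fix x assume x: "x \<in> {t..u}"
    then have xp: "x > 0" using t by auto
    show "(?g has_real_derivative b * x powr (b - 1) - b * R powr (b - 1)) (at x)"
      using xp by (auto intro!: derivative_eq_intros)
    have "R powr (b - 1) \<le> x powr (b - 1)"
      by (rule powr_mono2') (use b x xp tu in auto)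
    then show "0 \<le> b * x powr (b - 1) - b * R powr (b - 1)"
      using b by (simp add: mult_left_mono)
  qed (use tu in auto)
  then show ?thesis by (simp add: algebra_simps)
qed

lemma phi_incr:
  fixes a R t u :: real
  assumes a: "1 < a" "a < 2" and tu: "- R \<le> t" "t \<le> u" "u \<le> R"
  shows "a * (a - 1) * R powr (a - 2) * (u - t) \<le> phi a u - phi a t"
proof -
  define c where "c = (a - 1) * R powr (a - 1 - 1)"
  have b: "0 < a - 1" "a - 1 < 1" using a by auto
  have ph: "\<And>x. x \<ge> 0 \<Longrightarrow> phi a x = a * x powr (a - 1)"
    by (auto simp: phi_def sgn_if)
  have nh: "\<And>x. x < 0 \<Longrightarrow> phi a x = - a * (-x) powr (a - 1)"
    by (auto simp: phi_def sgn_if)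
  have key: "\<And>p q. 0 \<le> p \<Longrightarrow> p \<le> q \<Longrightarrow> q \<le> R \<Longrightarrow> c * (q - p) \<le> q powr (a - 1) - p powr (a - 1)"
    unfolding c_def using pow_incr[OF b] by blast
  have R0: "0 \<le> R" using tu by linarith
  have "c * (u - t) \<le> (phi a u - phi a t) / a"
  proof -
    consider "0 \<le> t" | "u < 0" | "t < 0" "0 \<le> u" by linarith
    then show ?thesis
    proof cases
      case 1
      have "(phi a u - phi a t) / a = u powr (a - 1) - t powr (a - 1)"
        using 1 tu a ph[of t] ph[of u] by (simp add: field_simps)
      then show ?thesis using key[of t u] tu 1 by simp
    next
      case 2
      have "(phi a u - phi a t) / a = (-t) powr (a - 1) - (-u) powr (a - 1)"
        using 2 tu a nh[of t] nh[of u] by (simp add: field_simps)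
      then show ?thesis using key[of "-u" "-t"] tu 2 by simp
    next
      case 3
      have "c * (u - 0) \<le> u powr (a - 1) - 0 powr (a - 1)" using key[of 0 u] 3 tu by simp
      moreover have "c * (-t - 0) \<le> (-t) powr (a - 1) - 0 powr (a - 1)" using key[of 0 "-t"] 3 tu by simp
      moreover have "(phi a u - phi a t) / a = u powr (a - 1) + (-t) powr (a - 1)"
        using 3 tu a nh[of t] ph[of u] by (simp add: field_simps)
      ultimately show ?thesis by (simp add: algebra_simps)
    qed
  qed
  then have "a * (c * (u - t)) \<le> phi a u - phi a t" using a by (simp add: field_simps)
  then show ?thesis unfolding c_def by (simp add: algebra_simps)
qed

lemma phi_mono:
  assumes a: "1 < a" "a < 2" and tu: "t \<le> u"
  shows "phi a t \<le> phi a u"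
proof -
  have "a * (a - 1) * (\<bar>t\<bar> + \<bar>u\<bar>) powr (a - 2) * (u - t) \<le> phi a u - phi a t"
    by (rule phi_incr) (use a tu in auto)
  moreover have "0 \<le> a * (a - 1) * (\<bar>t\<bar> + \<bar>u\<bar>) powr (a - 2) * (u - t)"
    using a tu by auto
  ultimately show ?thesis by linarith
qed

lemma card_diam:
  fixes S :: "int set"
  assumes fin: "finite S" and d: "\<And>x y. x \<in> S \<Longrightarrow> y \<in> S \<Longrightarrow> x \<le> y \<Longrightarrow> real_of_int (y - x) \<le> D"
    and D: "0 \<le> D"
  shows "real (card S) \<le> D + 1"
proof (cases "S = {}")
  case True then show ?thesis using D by simp
next
  case False
  have sub: "S \<subseteq> {Min S..Max S}" using fin by auto
  have "card S \<le> card {Min S..Max S}" by (rule card_mono) (use sub in auto)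
  also have "card {Min S..Max S} = nat (Max S - Min S + 1)" by simp
  finally have "real (card S) \<le> real (nat (Max S - Min S + 1))" by simp
  also have "\<dots> = real_of_int (Max S - Min S) + 1"
    using Min_le[OF fin Max_in[OF fin False]] by simp
  also have "real_of_int (Max S - Min S) \<le> D"
    by (rule d) (use fin False in \<open>auto\<close>)
  finally show ?thesis by simp
qed

lemma count_lin:
  fixes S :: "int set" and F :: "real \<Rightarrow> real"
  assumes fin: "finite S" and l: "l > 0" and dl: "0 \<le> dl"
    and sep: "\<And>x y. x \<in> S \<Longrightarrow> y \<in> S \<Longrightarrow> x \<le> y \<Longrightarrow> l * (y - x) \<le> \<bar>F y - F x\<bar>"
    and band: "\<And>x. x \<in> S \<Longrightarrow> \<bar>F x - e\<bar> \<le> dl"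
  shows "real (card S) \<le> 2 * dl / l + 1"
proof (rule card_diam[OF fin])
  fix x y assume xy: "x \<in> S" "y \<in> S" "x \<le> y"
  have "l * (real_of_int y - real_of_int x) \<le> 2 * dl" using sep[OF xy] band[OF xy(1)] band[OF xy(2)] by linarith
  then show "real_of_int (y - x) \<le> 2 * dl / l" using l by (simp add: field_simps)
qed (use dl l in auto)

lemma count_sc:
  fixes S :: "int set" and G G' :: "real \<Rightarrow> real"
  assumes fin: "finite S" and l: "l > 0" and dl: "0 \<le> dl"
    and sc: "\<And>x y. x \<in> S \<Longrightarrow> y \<in> S \<Longrightarrow> G x + G' x * (y - x) + l / 2 * (y - x)\<^sup>2 \<le> G y"
    and band: "\<And>x. x \<in> S \<Longrightarrow> \<bar>G x - e\<bar> \<le> dl"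
  shows "real (card S) \<le> 2 * (sqrt (4 * dl / l) + 1)"
proof -
  define Sp where "Sp = {x\<in>S. G' x \<ge> 0}"
  define Sm where "Sm = {x\<in>S. G' x < 0}"
  have key: "real_of_int (y - x) \<le> sqrt (4 * dl / l)" if "l / 2 * (y - x)\<^sup>2 \<le> 2 * dl" "x \<le> y" for x y :: int
  proof -
    have "(real_of_int (y - x))\<^sup>2 \<le> 4 * dl / l" using that l by (simp add: field_simps)
    then have "sqrt ((real_of_int (y - x))\<^sup>2) \<le> sqrt (4 * dl / l)" by (rule real_sqrt_le_mono)
    then show ?thesis using that by simp
  qed
  have cp: "real (card Sp) \<le> sqrt (4 * dl / l) + 1"
  proof (rule card_diam)
    fix x y assume xy: "x \<in> Sp" "y \<in> Sp" "x \<le> y"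
    have "G' x * (real_of_int y - real_of_int x) \<ge> 0" using xy by (auto simp: Sp_def)
    moreover have "x \<in> S" "y \<in> S" using xy by (auto simp: Sp_def)
    ultimately have "l / 2 * (real_of_int y - real_of_int x)\<^sup>2 \<le> 2 * dl"
      using sc[of x y] band[of x] band[of y] by auto
    then show "real_of_int (y - x) \<le> sqrt (4 * dl / l)" using key xy by auto
  qed (use fin dl l in \<open>auto simp: Sp_def\<close>)
  have cm: "real (card Sm) \<le> sqrt (4 * dl / l) + 1"
  proof (rule card_diam)
    fix x y assume xy: "x \<in> Sm" "y \<in> Sm" "x \<le> y"
    have "G' y * (real_of_int x - real_of_int y) \<ge> 0" using xy by (auto simp: Sm_def mult_nonpos_nonpos)
    moreover have "(real_of_int x - real_of_int y)\<^sup>2 = (real_of_int y - real_of_int x)\<^sup>2"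
      by (simp add: power2_commute)
    moreover have "x \<in> S" "y \<in> S" using xy by (auto simp: Sm_def)
    ultimately have "l / 2 * (real_of_int y - real_of_int x)\<^sup>2 \<le> 2 * dl"
      using sc[of y x] band[of x] band[of y] by auto
    then show "real_of_int (y - x) \<le> sqrt (4 * dl / l)" using key xy by auto
  qed (use fin dl l in \<open>auto simp: Sm_def\<close>)
  have "S = Sp \<union> Sm" by (auto simp: Sp_def Sm_def)
  then have "card S \<le> card Sp + card Sm" by (metis card_Un_le)
  then have "real (card S) \<le> real (card Sp) + real (card Sm)" by linarith
  then have "\<And>q. real (card Sp) \<le> q + 1 \<Longrightarrow> real (card Sm) \<le> q + 1 \<Longrightarrow> real (card S) \<le> 2 * (q + 1)"
    by auto
  then show ?thesis using cp cm by blast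
qed

lemma strong_conv:
  fixes G G' :: "real \<Rightarrow> real" and x y l :: real
  assumes der: "\<And>t. min x y \<le> t \<Longrightarrow> t \<le> max x y \<Longrightarrow> (G has_real_derivative G' t) (at t)"
    and mon: "\<And>t u. min x y \<le> t \<Longrightarrow> t \<le> u \<Longrightarrow> u \<le> max x y \<Longrightarrow> l * (u - t) \<le> G' u - G' t"
  shows "G x + G' x * (y - x) + l / 2 * (y - x)\<^sup>2 \<le> G y"
proof -
  let ?H = "\<lambda>t. G t - G' x * t - l / 2 * (t - x)\<^sup>2"
  have dH: "(?H has_real_derivative G' t - G' x - l * (t - x)) (at t)"
    if "min x y \<le> t" "t \<le> max x y" for t
    using der[OF that] by (auto intro!: derivative_eq_intros simp: field_simps)
  have "?H x \<le> ?H y"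
  proof (cases "x \<le> y")
    case True
    show ?thesis
    proof (rule deriv_nonneg_imp_mono[where g = ?H and a = x and b = y and g' = "\<lambda>t. G' t - G' x - l * (t - x)"])
      fix t assume "t \<in> {x..y}"
      then show "(?H has_real_derivative G' t - G' x - l * (t - x)) (at t)"
        "0 \<le> G' t - G' x - l * (t - x)"
        using dH[of t] mon[of x t] True by auto
    qed (use True in auto)
  next
    case False
    have "?H x \<le> ?H y"
    proof (rule deriv_nonpos_imp_antimono[where g = ?H and a = y and b = x and g' = "\<lambda>t. G' t - G' x - l * (t - x)"])
      fix t assume "t \<in> {y..x}"
      then show "(?H has_real_derivative G' t - G' x - l * (t - x)) (at t)"
        "G' t - G' x - l * (t - x) \<le> 0"
        using dH[of t] mon[of t x] False by (auto simp: algebra_simps)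
    qed (use False in auto)
    then show ?thesis .
  qed
  then show ?thesis by (simp add: algebra_simps)
qed

lemma PP_shift_deriv:
  assumes "1 < a"
  shows "((\<lambda>t. PP a (t + c)) has_real_derivative phi a (t + c)) (at t)"
proof -
  have d1: "(PP a has_real_derivative phi a (t + c)) (at ((\<lambda>t. t + c) t))" using PP_deriv[OF assms] by simp
  have d2: "((\<lambda>t. t + c) has_real_derivative 1) (at t)" by (auto intro!: derivative_eq_intros)
  from DERIV_chain2[OF d1 d2] show ?thesis by simp
qed

lemma PP_refl_deriv:
  assumes "1 < a"
  shows "((\<lambda>t. PP a (c - t)) has_real_derivative - phi a (c - t)) (at t)"
proof -
  have d1: "(PP a has_real_derivative phi a (c - t)) (at ((\<lambda>t. c - t) t))" using PP_deriv[OF assms] by simp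
  have d2: "((\<lambda>t. c - t) has_real_derivative -1) (at t)" by (auto intro!: derivative_eq_intros)
  from DERIV_chain2[OF d1 d2] show ?thesis by simp
qed

lemma phi_gap:
  assumes a: "1 < a" "a < 2" and A: "1 \<le> A" and B: "1 \<le> B"
    and t: "\<bar>t\<bar> \<le> A" "\<bar>t + d\<bar> \<le> B" and d: "1 \<le> d"
  shows "a * (a - 1) * (2 * min A B) powr (a - 2) \<le> phi a (t + d) - phi a t"
proof (cases "A \<le> B")
  case True
  have "a * (a - 1) * (2 * A) powr (a - 2) * ((t + 1) - t) \<le> phi a (t + 1) - phi a t"
    by (rule phi_incr) (use a t A in auto)
  moreover have "phi a (t + 1) \<le> phi a (t + d)" by (rule phi_mono) (use a d in auto)
  ultimately show ?thesis using True by simp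
next
  case False
  have "a * (a - 1) * (2 * B) powr (a - 2) * ((t + d) - (t + d - 1)) \<le> phi a (t + d) - phi a (t + d - 1)"
    by (rule phi_incr) (use a t B in auto)
  moreover have "phi a t \<le> phi a (t + d - 1)" by (rule phi_mono) (use a d in auto)
  ultimately show ?thesis using False by simp
qed

lemma count1:
  fixes S :: "int set" and d :: int
  assumes a: "1 < a" "a < 2" and A: "1 \<le> A" and B: "1 \<le> B" and d: "d \<noteq> 0"
    and dl: "0 \<le> dl" and fin: "finite S"
    and S: "\<And>x. x \<in> S \<Longrightarrow> \<bar>real_of_int x\<bar> \<le> A \<and> \<bar>real_of_int x + real_of_int d\<bar> \<le> B \<and>
              \<bar>PP a (real_of_int x + real_of_int d) - PP a (real_of_int x) - e\<bar> \<le> dl"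
  shows "real (card S) \<le> 2 * dl / (a * (a - 1) * (2 * min A B) powr (a - 2)) + 1"
proof -
  define l where "l = a * (a - 1) * (2 * min A B) powr (a - 2)"
  define F where "F = (\<lambda>t. PP a (t + real_of_int d) - PP a t)"
  have l: "l > 0" using a A B by (simp add: l_def)
  have "real (card S) \<le> 2 * dl / l + 1"
  proof (rule count_lin[OF fin l dl, where F = F and e = e])
    fix x assume "x \<in> S" then show "\<bar>F x - e\<bar> \<le> dl" using S by (simp add: F_def)
  next
    fix x y assume xy: "x \<in> S" "y \<in> S" "x \<le> y"
    have dom: "\<bar>t\<bar> \<le> A \<and> \<bar>t + real_of_int d\<bar> \<le> B" if "real_of_int x \<le> t" "t \<le> real_of_int y" for t
      using S[OF xy(1)] S[OF xy(2)] that by (auto simp: abs_le_iff)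
    have dF: "(F has_real_derivative phi a (t + real_of_int d) - phi a t) (at t)" for t
      unfolding F_def by (intro derivative_intros PP_shift_deriv PP_deriv a)
    consider "d \<ge> 1" | "d \<le> -1" using d by linarith
    then show "l * (real_of_int y - real_of_int x) \<le> \<bar>F (real_of_int y) - F (real_of_int x)\<bar>"
    proof cases
      case 1
      have "(\<lambda>t. F t - l * t) (real_of_int x) \<le> (\<lambda>t. F t - l * t) (real_of_int y)"
      proof (rule deriv_nonneg_imp_mono[where g = "\<lambda>t. F t - l * t" and a = "real_of_int x" and b = "real_of_int y" and g' = "\<lambda>t. phi a (t + real_of_int d) - phi a t - l"])
        fix t assume t: "t \<in> {real_of_int x..real_of_int y}"
        show "((\<lambda>t. F t - l * t) has_real_derivative phi a (t + real_of_int d) - phi a t - l) (at t)"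
          using dF[of t] by (auto intro!: derivative_eq_intros)
        show "0 \<le> phi a (t + real_of_int d) - phi a t - l"
          using phi_gap[OF a A B, of t "real_of_int d"] dom[of t] t 1 by (auto simp: l_def)
      qed (use xy in auto)
      then have "l * (real_of_int y - real_of_int x) \<le> F (real_of_int y) - F (real_of_int x)"
        by (simp add: right_diff_distrib)
      then show ?thesis by linarith
    next
      case 2
      have "(\<lambda>t. - F t - l * t) (real_of_int x) \<le> (\<lambda>t. - F t - l * t) (real_of_int y)"
      proof (rule deriv_nonneg_imp_mono[where g = "\<lambda>t. - F t - l * t" and a = "real_of_int x" and b = "real_of_int y" and g' = "\<lambda>t. - (phi a (t + real_of_int d) - phi a t) - l"])
        fix t assume t: "t \<in> {real_of_int x..real_of_int y}"
        show "((\<lambda>t. - F t - l * t) has_real_derivative - (phi a (t + real_of_int d) - phi a t) - l) (at t)"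
          using dF[of t] by (auto intro!: derivative_eq_intros)
        have "a * (a - 1) * (2 * min B A) powr (a - 2) \<le> phi a ((t + real_of_int d) + (- real_of_int d)) - phi a (t + real_of_int d)"
          by (rule phi_gap[OF a B A]) (use dom[of t] t 2 in auto)
        then show "0 \<le> - (phi a (t + real_of_int d) - phi a t) - l"
          by (auto simp: l_def min.commute)
      qed (use xy in auto)
      then have "l * (real_of_int y - real_of_int x) \<le> - (F (real_of_int y) - F (real_of_int x))"
        by (simp add: right_diff_distrib)
      then show ?thesis by linarith
    qed
  qed
  then show ?thesis by (simp add: l_def)
qed

lemma count2:
  fixes S :: "int set" and s :: int
  assumes a: "1 < a" "a < 2" and A: "0 < A" and B: "0 < B"
    and dl: "0 \<le> dl" and fin: "finite S"
    and S: "\<And>x. x \<in> S \<Longrightarrow> \<bar>real_of_int x\<bar> \<le> A \<and> \<bar>real_of_int s - real_of_int x\<bar> \<le> B \<and>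
              \<bar>PP a (real_of_int x) + PP a (real_of_int s - real_of_int x) - e\<bar> \<le> dl"
  shows "real (card S) \<le> 2 * (sqrt (4 * dl / (a * (a - 1) * (min A B) powr (a - 2))) + 1)"
proof -
  define l where "l = a * (a - 1) * (min A B) powr (a - 2)"
  define G where "G = (\<lambda>t. PP a t + PP a (real_of_int s - t))"
  define G' where "G' = (\<lambda>t. phi a t - phi a (real_of_int s - t))"
  have l: "l > 0" using a A B by (simp add: l_def)
  have dG: "(G has_real_derivative G' t) (at t)" for t
    unfolding G_def G'_def using PP_deriv[OF a(1), of t] PP_refl_deriv[OF a(1), of "real_of_int s" t]
    by (auto intro!: derivative_eq_intros)
  have "real (card S) \<le> 2 * (sqrt (4 * dl / l) + 1)"
  proof (rule count_sc[OF fin l dl, where G = G and G' = G' and e = e])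
    fix x assume "x \<in> S" then show "\<bar>G x - e\<bar> \<le> dl" using S by (simp add: G_def)
  next
    fix x y assume xy: "x \<in> S" "y \<in> S"
    have dom: "\<bar>t\<bar> \<le> A \<and> \<bar>real_of_int s - t\<bar> \<le> B"
      if "min (real_of_int x) (real_of_int y) \<le> t" "t \<le> max (real_of_int x) (real_of_int y)" for t
      using S[OF xy(1)] S[OF xy(2)] that by (auto simp: abs_le_iff)
    show "G (real_of_int x) + G' (real_of_int x) * (real_of_int y - real_of_int x) + l / 2 * (real_of_int y - real_of_int x)\<^sup>2
          \<le> G (real_of_int y)"
    proof (rule strong_conv)
      fix t assume "min (real_of_int x) (real_of_int y) \<le> t" "t \<le> max (real_of_int x) (real_of_int y)"
      show "(G has_real_derivative G' t) (at t)" by (rule dG)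
    next
      fix t u assume tu: "min (real_of_int x) (real_of_int y) \<le> t" "t \<le> u" "u \<le> max (real_of_int x) (real_of_int y)"
      have dt: "\<bar>t\<bar> \<le> A \<and> \<bar>real_of_int s - t\<bar> \<le> B" using dom tu by auto
      have du: "\<bar>u\<bar> \<le> A \<and> \<bar>real_of_int s - u\<bar> \<le> B" using dom tu by auto
      show "l * (u - t) \<le> G' u - G' t"
      proof (cases "A \<le> B")
        case True
        have "a * (a - 1) * A powr (a - 2) * (u - t) \<le> phi a u - phi a t"
          by (rule phi_incr) (use a tu dt du in auto)
        moreover have "phi a (real_of_int s - u) \<le> phi a (real_of_int s - t)"
          by (rule phi_mono) (use a tu in auto)
        ultimately show ?thesis using True by (auto simp: l_def G'_def)
      next
        case False
        have "a * (a - 1) * B powr (a - 2) * ((real_of_int s - t) - (real_of_int s - u)) \<le> phi a (real_of_int s - t) - phi a (real_of_int s - u)"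
          by (rule phi_incr) (use a tu dt du in auto)
        moreover have "phi a t \<le> phi a u"
          by (rule phi_mono) (use a tu in auto)
        ultimately show ?thesis using False by (auto simp: l_def G'_def)
      qed
    qed
  qed
  then show ?thesis by (simp add: l_def)
qed

lemma schur_finite:
  fixes H :: "'b \<Rightarrow> 'c \<Rightarrow> real"
  assumes finB: "finite Bs" and finC: "finite Cs"
    and h01: "\<And>b c. H b c = 0 \<or> H b c = 1"
    and rho: "\<And>c. c \<in> Cs \<Longrightarrow> (\<Sum>b\<in>Bs. H b c) \<le> \<rho>"
    and gam: "\<And>b. b \<in> Bs \<Longrightarrow> (\<Sum>c\<in>Cs. H b c) \<le> \<gamma>"
    and g0: "0 \<le> \<gamma>" and r0: "0 \<le> \<rho>"
    and zB: "(\<Sum>b\<in>Bs. (z b)\<^sup>2) \<le> 1"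
  shows "(\<Sum>c\<in>Cs. (\<Sum>b\<in>Bs. H b c * z b)\<^sup>2) \<le> \<rho> * \<gamma>"
proof -
  have H2: "\<And>b c. (H b c)\<^sup>2 = H b c" using h01 by (metis power2_eq_square mult_1_left mult_zero_left)
  have H0: "\<And>b c. 0 \<le> H b c" using h01 by (metis order_refl zero_le_one)
  have cs: "(\<Sum>b\<in>Bs. H b c * z b)\<^sup>2 \<le> \<rho> * (\<Sum>b\<in>Bs. H b c * (z b)\<^sup>2)" if c: "c \<in> Cs" for c
  proof -
    have "(\<Sum>b\<in>Bs. H b c * z b)\<^sup>2 = (\<Sum>b\<in>Bs. H b c * (H b c * z b))\<^sup>2"
      by (simp add: mult.assoc[symmetric] power2_eq_square[symmetric] H2)
    also have "\<dots> \<le> (\<Sum>b\<in>Bs. (H b c)\<^sup>2) * (\<Sum>b\<in>Bs. (H b c * z b)\<^sup>2)"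
      by (rule Cauchy_Schwarz_ineq_sum)
    also have "\<dots> = (\<Sum>b\<in>Bs. H b c) * (\<Sum>b\<in>Bs. H b c * (z b)\<^sup>2)"
      by (simp add: H2 power_mult_distrib)
    also have "\<dots> \<le> \<rho> * (\<Sum>b\<in>Bs. H b c * (z b)\<^sup>2)"
      by (rule mult_right_mono[OF rho[OF c]]) (auto intro!: sum_nonneg simp: H0)
    finally show ?thesis .
  qed
  have "(\<Sum>c\<in>Cs. (\<Sum>b\<in>Bs. H b c * z b)\<^sup>2) \<le> (\<Sum>c\<in>Cs. \<rho> * (\<Sum>b\<in>Bs. H b c * (z b)\<^sup>2))"
    by (rule sum_mono) (rule cs)
  also have "\<dots> = \<rho> * (\<Sum>b\<in>Bs. (z b)\<^sup>2 * (\<Sum>c\<in>Cs. H b c))"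
    by (simp add: sum_distrib_left sum_distrib_right sum.swap[of _ Cs] mult.commute mult.left_commute)
  also have "\<dots> \<le> \<rho> * (\<Sum>b\<in>Bs. (z b)\<^sup>2 * \<gamma>)"
    by (intro mult_left_mono sum_mono mult_left_mono gam r0) auto
  also have "\<dots> = \<rho> * \<gamma> * (\<Sum>b\<in>Bs. (z b)\<^sup>2)"
    by (simp add: sum_distrib_left[symmetric] sum_distrib_right[symmetric] mult_ac)
  also have "\<dots> \<le> \<rho> * \<gamma> * 1"
    by (rule mult_left_mono[OF zB]) (use r0 g0 in auto)
  finally show ?thesis by simp
qed

lemma schur:
  fixes H :: "'b \<Rightarrow> 'c \<Rightarrow> real"
  assumes finB: "finite Bs" and finC: "finite Cs"
    and supp: "\<And>b c. H b c \<noteq> 0 \<Longrightarrow> b \<in> Bs \<and> c \<in> Cs"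
    and h01: "\<And>b c. H b c = 0 \<or> H b c = 1"
    and rho: "\<And>c. c \<in> Cs \<Longrightarrow> (\<Sum>b\<in>Bs. H b c) \<le> \<rho>"
    and gam: "\<And>b. b \<in> Bs \<Longrightarrow> (\<Sum>c\<in>Cs. H b c) \<le> \<gamma>"
    and g0: "0 \<le> \<gamma>" and r0: "0 \<le> \<rho>"
  shows "opnorm2 H \<le> \<rho> * \<gamma>"
  unfolding opnorm2_def
proof (rule cSup_least)
  define z0 :: "'b \<Rightarrow> real" where "z0 = (\<lambda>b. if b = undefined then 1 else 0)"
  have s1: "(\<lambda>b. (z0 b)\<^sup>2) summable_on UNIV"
    by (subst summable_on_cong_neutral[where T = "{undefined}" and g = "\<lambda>b. (z0 b)\<^sup>2"]) (auto simp: z0_def)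
  have s2: "(\<Sum>\<^sub>\<infinity> b. (z0 b)\<^sup>2) = 1"
    by (subst infsum_cong_neutral[where T = "{undefined}" and g = "\<lambda>b. (z0 b)\<^sup>2"]) (auto simp: z0_def)
  show "{(\<Sum>\<^sub>\<infinity> c. (\<Sum>\<^sub>\<infinity> b. H b c * z b)\<^sup>2) | z.
       (\<lambda>b. (z b)\<^sup>2) summable_on UNIV \<and> (\<Sum>\<^sub>\<infinity> b. (z b)\<^sup>2) = 1} \<noteq> {}"
    using s1 s2 by blast
next
  fix x assume "x \<in> {(\<Sum>\<^sub>\<infinity> c. (\<Sum>\<^sub>\<infinity> b. H b c * z b)\<^sup>2) | z.
       (\<lambda>b. (z b)\<^sup>2) summable_on UNIV \<and> (\<Sum>\<^sub>\<infinity> b. (z b)\<^sup>2) = 1}"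
  then obtain z where x: "x = (\<Sum>\<^sub>\<infinity> c. (\<Sum>\<^sub>\<infinity> b. H b c * z b)\<^sup>2)"
    and zs: "(\<lambda>b. (z b)\<^sup>2) summable_on UNIV" and z1: "(\<Sum>\<^sub>\<infinity> b. (z b)\<^sup>2) = 1" by blast
  have inner: "(\<Sum>\<^sub>\<infinity> b. H b c * z b) = (\<Sum>b\<in>Bs. H b c * z b)" for c
  proof -
    have "(\<Sum>\<^sub>\<infinity> b. H b c * z b) = (\<Sum>\<^sub>\<infinity> b\<in>Bs. H b c * z b)"
      by (rule infsum_cong_neutral) (use supp in auto)
    then show ?thesis using finB by simp
  qed
  have outer: "x = (\<Sum>c\<in>Cs. (\<Sum>b\<in>Bs. H b c * z b)\<^sup>2)"
  proof -
    have "x = (\<Sum>\<^sub>\<infinity> c\<in>Cs. (\<Sum>b\<in>Bs. H b c * z b)\<^sup>2)"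
      unfolding x inner
    proof (rule infsum_cong_neutral)
      fix c assume "c \<in> UNIV - Cs"
      then have "\<And>b. H b c = 0" using supp by blast
      then show "(\<Sum>b\<in>Bs. H b c * z b)\<^sup>2 = 0" by simp
    qed auto
    then show ?thesis using finC by simp
  qed
  have zB: "(\<Sum>b\<in>Bs. (z b)\<^sup>2) \<le> 1"
  proof -
    have "(\<Sum>\<^sub>\<infinity> b\<in>Bs. (z b)\<^sup>2) \<le> (\<Sum>\<^sub>\<infinity> b. (z b)\<^sup>2)"
      by (rule infsum_mono_neutral) (use finB zs in auto)
    then show ?thesis using finB z1 by simp
  qed
  show "x \<le> \<rho> * \<gamma>"
    unfolding outer by (rule schur_finite[OF finB finC h01 rho gam g0 r0 zB])
qed

definition Ib :: "real \<Rightarrow> int set" where "Ib N = {k. \<bar>real_of_int k\<bar> \<le> N}"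

lemma finite_Ib: "finite (Ib N)"
proof -
  have "Ib N \<subseteq> {-\<lceil>N\<rceil>..\<lceil>N\<rceil>}"
    by (auto simp: Ib_def abs_le_iff) (linarith+)
  then show ?thesis by (rule finite_subset) simp
qed

lemma sum_ind: "finite A \<Longrightarrow> (\<Sum>x\<in>A. if P x then 1 else 0 :: real) = real (card {x\<in>A. P x})"
  by (simp add: sum.If_cases Int_def)

lemma count1_img:
  fixes Q :: "'q set" and f :: "'q \<Rightarrow> int" and d :: int
  assumes a: "1 < a" "a < 2" and A: "1 \<le> A" and B: "1 \<le> B" and dQ: "\<And>p. p \<in> Q \<Longrightarrow> d \<noteq> 0"
    and dl: "0 \<le> dl" and fin: "finite Q" and inj: "inj_on f Q"
    and S: "\<And>p. p \<in> Q \<Longrightarrow> \<bar>real_of_int (f p)\<bar> \<le> A \<and> \<bar>real_of_int (f p + d)\<bar> \<le> B \<and>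
              \<bar>PP a (real_of_int (f p + d)) - PP a (real_of_int (f p)) - e\<bar> \<le> dl"
  shows "real (card Q) \<le> 2 * dl / (a * (a - 1) * (2 * min A B) powr (a - 2)) + 1"
proof (cases "Q = {}")
  case True
  have "0 \<le> 2 * dl / (a * (a - 1) * (2 * min A B) powr (a - 2))" using a dl by simp
  then show ?thesis using True by simp
next
  case False
  then obtain p where "p \<in> Q" by blast
  note d = dQ[OF this]
  have "card Q = card (f ` Q)" using card_image[OF inj] by simp
  moreover have "real (card (f ` Q)) \<le> 2 * dl / (a * (a - 1) * (2 * min A B) powr (a - 2)) + 1"
    by (rule count1[OF a A B d dl]) (use fin S in auto)
  ultimately show ?thesis by simp
qed

lemma count2_img:
  fixes Q :: "'q set" and f :: "'q \<Rightarrow> int" and s :: int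
  assumes a: "1 < a" "a < 2" and A: "0 < A" and B: "0 < B"
    and dl: "0 \<le> dl" and fin: "finite Q" and inj: "inj_on f Q"
    and S: "\<And>p. p \<in> Q \<Longrightarrow> \<bar>real_of_int (f p)\<bar> \<le> A \<and> \<bar>real_of_int (s - f p)\<bar> \<le> B \<and>
              \<bar>PP a (real_of_int (f p)) + PP a (real_of_int (s - f p)) - e\<bar> \<le> dl"
  shows "real (card Q) \<le> 2 * (sqrt (4 * dl / (a * (a - 1) * (min A B) powr (a - 2))) + 1)"
proof -
  have "card Q = card (f ` Q)" using card_image[OF inj] by simp
  moreover have "real (card (f ` Q)) \<le> 2 * (sqrt (4 * dl / (a * (a - 1) * (min A B) powr (a - 2))) + 1)"
    by (rule count2[OF a A B dl]) (use fin S in auto)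
  ultimately show ?thesis by simp
qed

lemma bound1:
  fixes a C0 M :: real
  assumes a: "1 < a" "a < 2" and C0: "0 < C0" and M: "1 \<le> M"
  shows "2 * C0 / (a * (a - 1) * (2 * M) powr (a - 2)) + 1 \<le> (4 * C0 / (a * (a - 1)) + 1) * M powr (2 - a)"
proof -
  have c: "a * (a - 1) > 0" using a by simp
  have "1 / (2 * M) powr (a - 2) = (2 * M) powr (2 - a)"
    by (metis minus_diff_eq powr_minus inverse_eq_divide)
  also have "\<dots> = 2 powr (2 - a) * M powr (2 - a)" using M by (simp add: powr_mult)
  also have "\<dots> \<le> 2 * M powr (2 - a)"
  proof -
    have "2 powr (2 - a) \<le> 2 powr 1" by (rule powr_mono) (use a in auto)
    then show ?thesis by (intro mult_right_mono) auto
  qed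
  finally have i1: "1 / (2 * M) powr (a - 2) \<le> 2 * M powr (2 - a)" .
  have "2 * C0 / (a * (a - 1) * (2 * M) powr (a - 2)) = (2 * C0 / (a * (a - 1))) * (1 / (2 * M) powr (a - 2))"
    by simp
  also have "\<dots> \<le> (2 * C0 / (a * (a - 1))) * (2 * M powr (2 - a))"
    by (rule mult_left_mono[OF i1]) (use c C0 in auto)
  finally have i2: "2 * C0 / (a * (a - 1) * (2 * M) powr (a - 2)) \<le> 4 * C0 / (a * (a - 1)) * M powr (2 - a)"
    by simp
  have "1 \<le> M powr (2 - a)" using M a by (simp add: ge_one_powr_ge_zero)
  with i2 show ?thesis by (simp add: algebra_simps)
qed

lemma bound2:
  fixes a C0 M :: real
  assumes a: "1 < a" "a < 2" and C0: "0 < C0" and M: "1 \<le> M"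
  shows "2 * (sqrt (4 * C0 / (a * (a - 1) * M powr (a - 2))) + 1) \<le> (2 * sqrt (4 * C0 / (a * (a - 1))) + 2) * M powr (1 - a / 2)"
proof -
  have c: "a * (a - 1) > 0" using a by simp
  have inv: "M powr (2 - a) = 1 / M powr (a - 2)"
    by (metis minus_diff_eq powr_minus inverse_eq_divide)
  have "4 * C0 / (a * (a - 1) * M powr (a - 2)) = (4 * C0 / (a * (a - 1))) * M powr (2 - a)"
    unfolding inv by simp
  then have "sqrt (4 * C0 / (a * (a - 1) * M powr (a - 2))) = sqrt (4 * C0 / (a * (a - 1))) * sqrt (M powr (2 - a))"
    by (simp only: real_sqrt_mult)
  also have "sqrt (M powr (2 - a)) = M powr (1 - a / 2)"
  proof -
    have "sqrt (M powr (2 - a)) = (M powr (2 - a)) powr (1/2)" by (simp add: powr_half_sqrt)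
    also have "\<dots> = M powr ((2 - a) * (1/2))" by (simp add: powr_powr)
    also have "(2 - a) * (1/2) = 1 - a / 2" by simp
    finally show ?thesis .
  qed
  finally have e: "sqrt (4 * C0 / (a * (a - 1) * M powr (a - 2))) = sqrt (4 * C0 / (a * (a - 1))) * M powr (1 - a / 2)" .
  have "1 \<le> M powr (1 - a / 2)" using M a by (simp add: ge_one_powr_ge_zero)
  then show ?thesis unfolding e by (simp add: algebra_simps)
qed

lemma case1:
  fixes a C0 m N N1 N2 N3 :: real
  assumes a: "1 < a" "a < 2" and C0: "0 < C0"
    and N: "1 \<le> N1" "N1 \<le> N" "1 \<le> N2" "1 \<le> N3"
  defines "K \<equiv> 4 * C0 / (a * (a - 1)) + 1"
  shows "opnorm2 (\<lambda>(k, k1) (k2, k3). Tb a C0 m N N1 N2 N3 k k1 k2 k3)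
     \<le> (K * N1 powr (2 - a)) * (K * (min N2 N3) powr (2 - a))"
proof (rule schur[where Bs = "Ib N \<times> Ib N1" and Cs = "Ib N2 \<times> Ib N3"])
  show "finite (Ib N \<times> Ib N1)" "finite (Ib N2 \<times> Ib N3)" by (simp_all add: finite_Ib)
  have K0: "0 \<le> K" using a C0 by (simp add: K_def)
  then show "0 \<le> K * N1 powr (2 - a)" "0 \<le> K * (min N2 N3) powr (2 - a)" by simp_all
  fix b c :: "int \<times> int"
  show "(case b of (k, k1) \<Rightarrow> \<lambda>(k2, k3). Tb a C0 m N N1 N2 N3 k k1 k2 k3) c \<noteq> 0 \<Longrightarrow> b \<in> Ib N \<times> Ib N1 \<and> c \<in> Ib N2 \<times> Ib N3"
    by (cases b; cases c) (auto simp: Tb_def inS_def Ib_def split: if_splits)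
  show "(case b of (k, k1) \<Rightarrow> \<lambda>(k2, k3). Tb a C0 m N N1 N2 N3 k k1 k2 k3) c = 0 \<or>
        (case b of (k, k1) \<Rightarrow> \<lambda>(k2, k3). Tb a C0 m N N1 N2 N3 k k1 k2 k3) c = 1"
    by (cases b; cases c) (auto simp: Tb_def)
next
  fix c :: "int \<times> int" assume c: "c \<in> Ib N2 \<times> Ib N3"
  obtain k2 k3 where c': "c = (k2, k3)" by (cases c)
  let ?Q = "{b \<in> Ib N \<times> Ib N1. inS a C0 m N N1 N2 N3 (fst b) (snd b) k2 k3}"
  have "(\<Sum>b\<in>Ib N \<times> Ib N1. (case b of (k, k1) \<Rightarrow> \<lambda>(k2, k3). Tb a C0 m N N1 N2 N3 k k1 k2 k3) c)
      = (\<Sum>b\<in>Ib N \<times> Ib N1. if inS a C0 m N N1 N2 N3 (fst b) (snd b) k2 k3 then 1 else 0)"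
    by (rule sum.cong) (auto simp: c' Tb_def)
  also have "\<dots> = real (card ?Q)" by (rule sum_ind) (simp add: finite_Ib)
  also have "\<dots> \<le> 2 * C0 / (a * (a - 1) * (2 * min N1 N) powr (a - 2)) + 1"
  proof (rule count1_img[OF a _ _ _ _ _ _, where f = snd and d = "k3 - k2" and e = "PP a k3 - PP a k2 - m"])
    show "inj_on snd ?Q" by (auto simp: inj_on_def inS_def)
    show "finite ?Q" by (rule finite_subset[of _ "Ib N \<times> Ib N1"]) (auto simp: finite_Ib)
    fix p assume p: "p \<in> ?Q"
    show "\<bar>real_of_int (snd p)\<bar> \<le> N1 \<and> \<bar>real_of_int (snd p + (k3 - k2))\<bar> \<le> N \<and>
          \<bar>PP a (real_of_int (snd p + (k3 - k2))) - PP a (real_of_int (snd p)) - (PP a k3 - PP a k2 - m)\<bar> \<le> C0"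
    proof -
      have eq: "snd p + (k3 - k2) = fst p" using p by (auto simp: inS_def)
      show ?thesis unfolding eq using p by (auto simp: inS_def PP_def Ib_def abs_le_iff)
    qed
    show "k3 - k2 \<noteq> 0" using p by (auto simp: inS_def)
  qed (use N C0 in auto)
  also have "\<dots> \<le> K * N1 powr (2 - a)"
    using bound1[OF a C0 N(1)] N by (simp add: K_def min_absorb1)
  finally show "(\<Sum>b\<in>Ib N \<times> Ib N1. (case b of (k, k1) \<Rightarrow> \<lambda>(k2, k3). Tb a C0 m N N1 N2 N3 k k1 k2 k3) c)
      \<le> K * N1 powr (2 - a)" .
next
  fix b :: "int \<times> int" assume b: "b \<in> Ib N \<times> Ib N1"
  obtain k k1 where b': "b = (k, k1)" by (cases b)
  let ?Q = "{c \<in> Ib N2 \<times> Ib N3. inS a C0 m N N1 N2 N3 k k1 (fst c) (snd c)}"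
  have "(\<Sum>c\<in>Ib N2 \<times> Ib N3. (case b of (k, k1) \<Rightarrow> \<lambda>(k2, k3). Tb a C0 m N N1 N2 N3 k k1 k2 k3) c)
      = (\<Sum>c\<in>Ib N2 \<times> Ib N3. if inS a C0 m N N1 N2 N3 k k1 (fst c) (snd c) then 1 else 0)"
    by (rule sum.cong) (auto simp: b' Tb_def)
  also have "\<dots> = real (card ?Q)" by (rule sum_ind) (simp add: finite_Ib)
  also have "\<dots> \<le> 2 * C0 / (a * (a - 1) * (2 * min N2 N3) powr (a - 2)) + 1"
  proof (rule count1_img[OF a _ _ _ _ _ _, where f = fst and d = "k - k1" and e = "PP a k + m - PP a k1"])
    show "inj_on fst ?Q" by (auto simp: inj_on_def inS_def)
    show "finite ?Q" by (rule finite_subset[of _ "Ib N2 \<times> Ib N3"]) (auto simp: finite_Ib)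
    fix p assume p: "p \<in> ?Q"
    show "\<bar>real_of_int (fst p)\<bar> \<le> N2 \<and> \<bar>real_of_int (fst p + (k - k1))\<bar> \<le> N3 \<and>
          \<bar>PP a (real_of_int (fst p + (k - k1))) - PP a (real_of_int (fst p)) - (PP a k + m - PP a k1)\<bar> \<le> C0"
    proof -
      have eq: "fst p + (k - k1) = snd p" using p by (auto simp: inS_def)
      show ?thesis unfolding eq using p by (auto simp: inS_def PP_def Ib_def abs_le_iff)
    qed
    show "k - k1 \<noteq> 0" using p by (auto simp: inS_def)
  qed (use N C0 in auto)
  also have "\<dots> \<le> K * (min N2 N3) powr (2 - a)"
    using bound1[OF a C0, of "min N2 N3"] N by (simp add: K_def)
  finally show "(\<Sum>c\<in>Ib N2 \<times> Ib N3. (case b of (k, k1) \<Rightarrow> \<lambda>(k2, k3). Tb a C0 m N N1 N2 N3 k k1 k2 k3) c)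
      \<le> K * (min N2 N3) powr (2 - a)" .
qed

lemma case2:
  fixes a C0 m N N1 N2 N3 :: real
  assumes a: "1 < a" "a < 2" and C0: "0 < C0"
    and N: "1 \<le> N1" "1 \<le> N2" "1 \<le> N3" "N3 \<le> N"
  defines "K \<equiv> 4 * C0 / (a * (a - 1)) + 1"
  shows "opnorm2 (\<lambda>(k, k3) (k1, k2). Tb a C0 m N N1 N2 N3 k k1 k2 k3)
     \<le> (K * N3 powr (2 - a)) * (K * (min N1 N2) powr (2 - a))"
proof (rule schur[where Bs = "Ib N \<times> Ib N3" and Cs = "Ib N1 \<times> Ib N2"])
  show "finite (Ib N \<times> Ib N3)" "finite (Ib N1 \<times> Ib N2)" by (simp_all add: finite_Ib)
  have K0: "0 \<le> K" using a C0 by (simp add: K_def)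
  then show "0 \<le> K * N3 powr (2 - a)" "0 \<le> K * (min N1 N2) powr (2 - a)" by simp_all
  fix b c :: "int \<times> int"
  show "(case b of (k, k3) \<Rightarrow> \<lambda>(k1, k2). Tb a C0 m N N1 N2 N3 k k1 k2 k3) c \<noteq> 0 \<Longrightarrow> b \<in> Ib N \<times> Ib N3 \<and> c \<in> Ib N1 \<times> Ib N2"
    by (cases b; cases c) (auto simp: Tb_def inS_def Ib_def split: if_splits)
  show "(case b of (k, k3) \<Rightarrow> \<lambda>(k1, k2). Tb a C0 m N N1 N2 N3 k k1 k2 k3) c = 0 \<or>
        (case b of (k, k3) \<Rightarrow> \<lambda>(k1, k2). Tb a C0 m N N1 N2 N3 k k1 k2 k3) c = 1"
    by (cases b; cases c) (auto simp: Tb_def)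
next
  fix c :: "int \<times> int" assume c: "c \<in> Ib N1 \<times> Ib N2"
  obtain k1 k2 where c': "c = (k1, k2)" by (cases c)
  let ?Q = "{b \<in> Ib N \<times> Ib N3. inS a C0 m N N1 N2 N3 (fst b) k1 k2 (snd b)}"
  have "(\<Sum>b\<in>Ib N \<times> Ib N3. (case b of (k, k3) \<Rightarrow> \<lambda>(k1, k2). Tb a C0 m N N1 N2 N3 k k1 k2 k3) c)
      = (\<Sum>b\<in>Ib N \<times> Ib N3. if inS a C0 m N N1 N2 N3 (fst b) k1 k2 (snd b) then 1 else 0)"
    by (rule sum.cong) (auto simp: c' Tb_def)
  also have "\<dots> = real (card ?Q)" by (rule sum_ind) (simp add: finite_Ib)
  also have "\<dots> \<le> 2 * C0 / (a * (a - 1) * (2 * min N3 N) powr (a - 2)) + 1"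
  proof (rule count1_img[OF a _ _ _ _ _ _, where f = snd and d = "k1 - k2" and e = "PP a k1 - PP a k2 - m"])
    show "inj_on snd ?Q" by (auto simp: inj_on_def inS_def)
    show "finite ?Q" by (rule finite_subset[of _ "Ib N \<times> Ib N3"]) (auto simp: finite_Ib)
    fix p assume p: "p \<in> ?Q"
    show "\<bar>real_of_int (snd p)\<bar> \<le> N3 \<and> \<bar>real_of_int (snd p + (k1 - k2))\<bar> \<le> N \<and>
          \<bar>PP a (real_of_int (snd p + (k1 - k2))) - PP a (real_of_int (snd p)) - (PP a k1 - PP a k2 - m)\<bar> \<le> C0"
    proof -
      have eq: "snd p + (k1 - k2) = fst p" using p by (auto simp: inS_def)
      show ?thesis unfolding eq using p by (auto simp: inS_def PP_def Ib_def abs_le_iff)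
    qed
    show "k1 - k2 \<noteq> 0" using p by (auto simp: inS_def)
  qed (use N C0 in auto)
  also have "\<dots> \<le> K * N3 powr (2 - a)"
    using bound1[OF a C0 N(3)] N by (simp add: K_def min_absorb1)
  finally show "(\<Sum>b\<in>Ib N \<times> Ib N3. (case b of (k, k3) \<Rightarrow> \<lambda>(k1, k2). Tb a C0 m N N1 N2 N3 k k1 k2 k3) c)
      \<le> K * N3 powr (2 - a)" .
next
  fix b :: "int \<times> int" assume b: "b \<in> Ib N \<times> Ib N3"
  obtain k k3 where b': "b = (k, k3)" by (cases b)
  let ?Q = "{c \<in> Ib N1 \<times> Ib N2. inS a C0 m N N1 N2 N3 k (fst c) (snd c) k3}"
  have "(\<Sum>c\<in>Ib N1 \<times> Ib N2. (case b of (k, k3) \<Rightarrow> \<lambda>(k1, k2). Tb a C0 m N N1 N2 N3 k k1 k2 k3) c)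
      = (\<Sum>c\<in>Ib N1 \<times> Ib N2. if inS a C0 m N N1 N2 N3 k (fst c) (snd c) k3 then 1 else 0)"
    by (rule sum.cong) (auto simp: b' Tb_def)
  also have "\<dots> = real (card ?Q)" by (rule sum_ind) (simp add: finite_Ib)
  also have "\<dots> \<le> 2 * C0 / (a * (a - 1) * (2 * min N2 N1) powr (a - 2)) + 1"
  proof (rule count1_img[OF a _ _ _ _ _ _, where f = snd and d = "k - k3" and e = "PP a k + m - PP a k3"])
    show "inj_on snd ?Q" by (auto simp: inj_on_def inS_def)
    show "finite ?Q" by (rule finite_subset[of _ "Ib N1 \<times> Ib N2"]) (auto simp: finite_Ib)
    fix p assume p: "p \<in> ?Q"
    show "\<bar>real_of_int (snd p)\<bar> \<le> N2 \<and> \<bar>real_of_int (snd p + (k - k3))\<bar> \<le> N1 \<and>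
          \<bar>PP a (real_of_int (snd p + (k - k3))) - PP a (real_of_int (snd p)) - (PP a k + m - PP a k3)\<bar> \<le> C0"
    proof -
      have eq: "snd p + (k - k3) = fst p" using p by (auto simp: inS_def)
      show ?thesis unfolding eq using p by (auto simp: inS_def PP_def Ib_def abs_le_iff)
    qed
    show "k - k3 \<noteq> 0" using p by (auto simp: inS_def)
  qed (use N C0 in auto)
  also have "\<dots> \<le> K * (min N1 N2) powr (2 - a)"
    using bound1[OF a C0, of "min N1 N2"] N by (simp add: K_def min.commute)
  finally show "(\<Sum>c\<in>Ib N1 \<times> Ib N2. (case b of (k, k3) \<Rightarrow> \<lambda>(k1, k2). Tb a C0 m N N1 N2 N3 k k1 k2 k3) c)
      \<le> K * (min N1 N2) powr (2 - a)" .
qed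

lemma case3:
  fixes a C0 m N N1 N2 N3 :: real
  assumes a: "1 < a" "a < 2" and C0: "0 < C0"
    and N: "1 \<le> N1" "1 \<le> N2" "1 \<le> N3" "1 \<le> N"
  defines "K \<equiv> 2 * sqrt (4 * C0 / (a * (a - 1))) + 2"
  shows "opnorm2 (\<lambda>(k, k2) (k1, k3). Tb a C0 m N N1 N2 N3 k k1 k2 k3)
     \<le> (K * (min N N2) powr (1 - a / 2)) * (K * (min N1 N3) powr (1 - a / 2))"
proof (rule schur[where Bs = "Ib N \<times> Ib N2" and Cs = "Ib N1 \<times> Ib N3"])
  show "finite (Ib N \<times> Ib N2)" "finite (Ib N1 \<times> Ib N3)" by (simp_all add: finite_Ib)
  have K0: "0 \<le> K" using a C0 by (simp add: K_def)
  then show "0 \<le> K * (min N N2) powr (1 - a / 2)" "0 \<le> K * (min N1 N3) powr (1 - a / 2)" by simp_all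
  fix b c :: "int \<times> int"
  show "(case b of (k, k2) \<Rightarrow> \<lambda>(k1, k3). Tb a C0 m N N1 N2 N3 k k1 k2 k3) c \<noteq> 0 \<Longrightarrow> b \<in> Ib N \<times> Ib N2 \<and> c \<in> Ib N1 \<times> Ib N3"
    by (cases b; cases c) (auto simp: Tb_def inS_def Ib_def split: if_splits)
  show "(case b of (k, k2) \<Rightarrow> \<lambda>(k1, k3). Tb a C0 m N N1 N2 N3 k k1 k2 k3) c = 0 \<or>
        (case b of (k, k2) \<Rightarrow> \<lambda>(k1, k3). Tb a C0 m N N1 N2 N3 k k1 k2 k3) c = 1"
    by (cases b; cases c) (auto simp: Tb_def)
next
  fix c :: "int \<times> int" assume c: "c \<in> Ib N1 \<times> Ib N3"
  obtain k1 k3 where c': "c = (k1, k3)" by (cases c)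
  let ?Q = "{b \<in> Ib N \<times> Ib N2. inS a C0 m N N1 N2 N3 (fst b) k1 (snd b) k3}"
  have "(\<Sum>b\<in>Ib N \<times> Ib N2. (case b of (k, k2) \<Rightarrow> \<lambda>(k1, k3). Tb a C0 m N N1 N2 N3 k k1 k2 k3) c)
      = (\<Sum>b\<in>Ib N \<times> Ib N2. if inS a C0 m N N1 N2 N3 (fst b) k1 (snd b) k3 then 1 else 0)"
    by (rule sum.cong) (auto simp: c' Tb_def)
  also have "\<dots> = real (card ?Q)" by (rule sum_ind) (simp add: finite_Ib)
  also have "\<dots> \<le> 2 * (sqrt (4 * C0 / (a * (a - 1) * (min N N2) powr (a - 2))) + 1)"
  proof (rule count2_img[OF a _ _ _ _ _, where f = fst and s = "k1 + k3" and e = "PP a k1 + PP a k3 - m"])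
    show "inj_on fst ?Q" by (auto simp: inj_on_def inS_def)
    show "finite ?Q" by (rule finite_subset[of _ "Ib N \<times> Ib N2"]) (auto simp: finite_Ib)
    fix p assume p: "p \<in> ?Q"
    show "\<bar>real_of_int (fst p)\<bar> \<le> N \<and> \<bar>real_of_int (k1 + k3 - fst p)\<bar> \<le> N2 \<and>
          \<bar>PP a (real_of_int (fst p)) + PP a (real_of_int (k1 + k3 - fst p)) - (PP a k1 + PP a k3 - m)\<bar> \<le> C0"
    proof -
      have eq: "k1 + k3 - fst p = snd p" using p by (auto simp: inS_def)
      show ?thesis unfolding eq using p by (auto simp: inS_def PP_def Ib_def abs_le_iff)
    qed
  qed (use N C0 in auto)
  also have "\<dots> \<le> K * (min N N2) powr (1 - a / 2)"
    using bound2[OF a C0, of "min N N2"] N by (simp add: K_def)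
  finally show "(\<Sum>b\<in>Ib N \<times> Ib N2. (case b of (k, k2) \<Rightarrow> \<lambda>(k1, k3). Tb a C0 m N N1 N2 N3 k k1 k2 k3) c)
      \<le> K * (min N N2) powr (1 - a / 2)" .
next
  fix b :: "int \<times> int" assume b: "b \<in> Ib N \<times> Ib N2"
  obtain k k2 where b': "b = (k, k2)" by (cases b)
  let ?Q = "{c \<in> Ib N1 \<times> Ib N3. inS a C0 m N N1 N2 N3 k (fst c) k2 (snd c)}"
  have "(\<Sum>c\<in>Ib N1 \<times> Ib N3. (case b of (k, k2) \<Rightarrow> \<lambda>(k1, k3). Tb a C0 m N N1 N2 N3 k k1 k2 k3) c)
      = (\<Sum>c\<in>Ib N1 \<times> Ib N3. if inS a C0 m N N1 N2 N3 k (fst c) k2 (snd c) then 1 else 0)"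
    by (rule sum.cong) (auto simp: b' Tb_def)
  also have "\<dots> = real (card ?Q)" by (rule sum_ind) (simp add: finite_Ib)
  also have "\<dots> \<le> 2 * (sqrt (4 * C0 / (a * (a - 1) * (min N1 N3) powr (a - 2))) + 1)"
  proof (rule count2_img[OF a _ _ _ _ _, where f = fst and s = "k + k2" and e = "PP a k + PP a k2 + m"])
    show "inj_on fst ?Q" by (auto simp: inj_on_def inS_def)
    show "finite ?Q" by (rule finite_subset[of _ "Ib N1 \<times> Ib N3"]) (auto simp: finite_Ib)
    fix p assume p: "p \<in> ?Q"
    show "\<bar>real_of_int (fst p)\<bar> \<le> N1 \<and> \<bar>real_of_int (k + k2 - fst p)\<bar> \<le> N3 \<and>
          \<bar>PP a (real_of_int (fst p)) + PP a (real_of_int (k + k2 - fst p)) - (PP a k + PP a k2 + m)\<bar> \<le> C0"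
    proof -
      have eq: "k + k2 - fst p = snd p" using p by (auto simp: inS_def)
      show ?thesis unfolding eq using p by (auto simp: inS_def PP_def Ib_def abs_le_iff)
    qed
  qed (use N C0 in auto)
  also have "\<dots> \<le> K * (min N1 N3) powr (1 - a / 2)"
    using bound2[OF a C0, of "min N1 N3"] N by (simp add: K_def)
  finally show "(\<Sum>c\<in>Ib N1 \<times> Ib N3. (case b of (k, k2) \<Rightarrow> \<lambda>(k1, k3). Tb a C0 m N N1 N2 N3 k k1 k2 k3) c)
      \<le> K * (min N1 N3) powr (1 - a / 2)" .
qed

theorem lemma2p13:
  fixes \<alpha> C0 :: real
  assumes "1 < \<alpha>" "\<alpha> < 2" "C0 > 0"
  shows "\<exists>C. \<forall>N N1 N2 N3 m :: real.
    dyadic N \<and> dyadic N1 \<and> dyadic N2 \<and> dyadic N3 \<and>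
    1 \<le> N1 \<and> N1 \<le> N \<and> 1 \<le> N2 \<and> N2 \<le> N \<and> 1 \<le> N3 \<and> N3 \<le> N \<longrightarrow>
      opnorm2 (\<lambda>(k, k1) (k2, k3). Tb \<alpha> C0 m N N1 N2 N3 k k1 k2 k3)
        \<le> C * (min N2 N3) powr (2 - \<alpha>) * N1 powr (2 - \<alpha>) \<and>
      opnorm2 (\<lambda>(k, k3) (k1, k2). Tb \<alpha> C0 m N N1 N2 N3 k k1 k2 k3)
        \<le> C * (min N1 N2) powr (2 - \<alpha>) * N3 powr (2 - \<alpha>) \<and>
      opnorm2 (\<lambda>(k, k2) (k1, k3). Tb \<alpha> C0 m N N1 N2 N3 k k1 k2 k3)
        \<le> C * (min N1 N3) powr (1 - \<alpha> / 2) * (min N N2) powr (1 - \<alpha> / 2)"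
proof -
  define K1 where "K1 = 4 * C0 / (\<alpha> * (\<alpha> - 1)) + 1"
  define K2 where "K2 = 2 * sqrt (4 * C0 / (\<alpha> * (\<alpha> - 1))) + 2"
  have fin: "K1 * K1 * (X * Y) \<le> (K1 * K1 + K2 * K2) * (X * Y)"
    "K2 * K2 * (X * Y) \<le> (K1 * K1 + K2 * K2) * (X * Y)" if "0 \<le> X" "0 \<le> Y" for X Y :: real
    using that by (intro mult_right_mono; simp)+
  show ?thesis
  proof (intro exI allI impI conjI)
    fix N N1 N2 N3 m :: real
    assume h: "dyadic N \<and> dyadic N1 \<and> dyadic N2 \<and> dyadic N3 \<and>
    1 \<le> N1 \<and> N1 \<le> N \<and> 1 \<le> N2 \<and> N2 \<le> N \<and> 1 \<le> N3 \<and> N3 \<le> N"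
    have c1: "opnorm2 (\<lambda>(k, k1) (k2, k3). Tb \<alpha> C0 m N N1 N2 N3 k k1 k2 k3)
     \<le> (K1 * N1 powr (2 - \<alpha>)) * (K1 * (min N2 N3) powr (2 - \<alpha>))"
      unfolding K1_def by (rule case1) (use assms h in auto)
    have c2: "opnorm2 (\<lambda>(k, k3) (k1, k2). Tb \<alpha> C0 m N N1 N2 N3 k k1 k2 k3)
     \<le> (K1 * N3 powr (2 - \<alpha>)) * (K1 * (min N1 N2) powr (2 - \<alpha>))"
      unfolding K1_def by (rule case2) (use assms h in auto)
    have c3: "opnorm2 (\<lambda>(k, k2) (k1, k3). Tb \<alpha> C0 m N N1 N2 N3 k k1 k2 k3)
     \<le> (K2 * (min N N2) powr (1 - \<alpha> / 2)) * (K2 * (min N1 N3) powr (1 - \<alpha> / 2))"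
      unfolding K2_def by (rule case3) (use assms h in auto)
    show "opnorm2 (\<lambda>(k, k1) (k2, k3). Tb \<alpha> C0 m N N1 N2 N3 k k1 k2 k3)
        \<le> (K1 * K1 + K2 * K2) * (min N2 N3) powr (2 - \<alpha>) * N1 powr (2 - \<alpha>)"
      using c1 fin(1)[of "(min N2 N3) powr (2 - \<alpha>)" "N1 powr (2 - \<alpha>)"] by (simp add: mult_ac)
    show "opnorm2 (\<lambda>(k, k3) (k1, k2). Tb \<alpha> C0 m N N1 N2 N3 k k1 k2 k3)
        \<le> (K1 * K1 + K2 * K2) * (min N1 N2) powr (2 - \<alpha>) * N3 powr (2 - \<alpha>)"
      using c2 fin(1)[of "(min N1 N2) powr (2 - \<alpha>)" "N3 powr (2 - \<alpha>)"] by (simp add: mult_ac)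
    show "opnorm2 (\<lambda>(k, k2) (k1, k3). Tb \<alpha> C0 m N N1 N2 N3 k k1 k2 k3)
        \<le> (K1 * K1 + K2 * K2) * (min N1 N3) powr (1 - \<alpha> / 2) * (min N N2) powr (1 - \<alpha> / 2)"
      using c3 fin(2)[of "(min N1 N3) powr (1 - \<alpha> / 2)" "(min N N2) powr (1 - \<alpha> / 2)"] by (simp add: mult_ac)
  qed
qed

end
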